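(* Let $U\subseteq X$ be open and $A\subseteq U$ closed. Then for every $x\in X$, $$\varepsilon_x^{A\cup (X\setminus U)}(U)\ \ge\ \|\varepsilon_x^A\|-\sup_{z\in X\setminus U}\|\varepsilon_z^A\|.$$
   Context: $(X,\rho)$ is a separable metric space; $\mathcal M(X)$ the finite Borel measures (extended to universally measurable sets), $\|\mu\|:=\mu(X)$, $\varepsilon_x$ the Dirac measure. For every open $U\subseteq X$ and $x\in X$ a measure $\mu_x^U\in\mathcal M(X)$ is given such that for all open $U,V$ and all $x$: $\mu_x^U(U)=0$, $\|\mu_x^U\|\le1$, $\mu_x^U=\varepsilon_x$ if $x\notin U$; $y\mapsto\mu_y^U(E)$ is universally measurable for every Borel $E$; and $\mu_x^U=\int\mu_y^U\,d\mu_x^V(y)$ whenever $V\subseteq U$. For closed $A\subseteq X$, $\varepsilon_x^A:=\mu_x^{X\setminus A}$. *)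

theory Defs
  imports "HOL-Probability.Giry_Monad"
begin

text \<open>Finite Borel measure on the ambient space X (= UNIV of the type).\<close>
definition finite_borel_measure :: "'a::topological_space measure \<Rightarrow> bool" where
  "finite_borel_measure M \<longleftrightarrow> sets M = sets borel \<and> emeasure M UNIV < \<infinity>"

definition univ_measurable :: "('a::topological_space \<Rightarrow> ennreal) \<Rightarrow> bool" where
  "univ_measurable f \<longleftrightarrow>
     (\<forall>M. finite_borel_measure M \<longrightarrow> f \<in> borel_measurable (completion M))"

text \<open>The standing assumptions on the family \<open>\<mu> U x = \<mu>_x^U\<close> (only used for open U).\<close>
definition kernel_family :: "('a::topological_space set \<Rightarrow> 'a \<Rightarrow> 'a measure) \<Rightarrow> bool" where
  "kernel_family \<mu> \<longleftrightarrow>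
     (\<forall>U x. open U \<longrightarrow>
        finite_borel_measure (\<mu> U x) \<and>
        emeasure (\<mu> U x) U = 0 \<and>
        emeasure (\<mu> U x) UNIV \<le> 1 \<and>
        (x \<notin> U \<longrightarrow> \<mu> U x = return borel x)) \<and>
     (\<forall>U E. open U \<longrightarrow> E \<in> sets borel \<longrightarrow> univ_measurable (\<lambda>y. emeasure (\<mu> U y) E)) \<and>
     (\<forall>U V x. open U \<longrightarrow> open V \<longrightarrow> V \<subseteq> U \<longrightarrow>
        (\<forall>E \<in> sets borel.
           emeasure (\<mu> U x) E = (\<integral>\<^sup>+ y. emeasure (\<mu> U y) E \<partial>completion (\<mu> V x))))"

definition sweep :: "('a set \<Rightarrow> 'a \<Rightarrow> 'a measure) \<Rightarrow> 'a set \<Rightarrow> 'a \<Rightarrow> 'a measure" where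
  "sweep \<mu> A x = \<mu> (- A) x"

end

theory Submission
  imports Defs
begin

theorem lemma4p8:
  fixes \<mu> :: "'a::metric_space set \<Rightarrow> 'a \<Rightarrow> 'a measure"
    and U A :: "'a set" and x :: 'a
  assumes "separable_space (euclidean :: 'a topology)"
    and "kernel_family \<mu>"
    and "open U" and "closed A" and "A \<subseteq> U"
  shows "emeasure (sweep \<mu> (A \<union> - U) x) U
           \<ge> emeasure (sweep \<mu> A x) UNIV - (SUP z \<in> - U. emeasure (sweep \<mu> A z) UNIV)"
proof -
  define V where "V = - A"
  define W where "W = - (A \<union> - U)"
  define \<nu> where "\<nu> = \<mu> W x"
  define S where "S = (SUP z \<in> - U. emeasure (sweep \<mu> A z) UNIV)"
  have oV: "open V" using assms(4) by (simp add: V_def open_Compl)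
  have oW: "open W" using assms(3,4) by (auto simp: W_def)
  have WV: "W \<subseteq> V" by (auto simp: W_def V_def)
  have K1: "\<And>U x. open U \<Longrightarrow> finite_borel_measure (\<mu> U x) \<and> emeasure (\<mu> U x) U = 0 \<and>
        emeasure (\<mu> U x) UNIV \<le> 1 \<and> (x \<notin> U \<longrightarrow> \<mu> U x = return borel x)"
    by (rule conjunct1[OF assms(2)[unfolded kernel_family_def], rule_format])
  have K3: "emeasure (\<mu> V x) UNIV = (\<integral>\<^sup>+ y. emeasure (\<mu> V y) UNIV \<partial>completion \<nu>)"
  proof -
    have "\<forall>U V x. open U \<longrightarrow> open V \<longrightarrow> V \<subseteq> U \<longrightarrow>
        (\<forall>E \<in> sets borel.
           emeasure (\<mu> U x) E = (\<integral>\<^sup>+ y. emeasure (\<mu> U y) E \<partial>completion (\<mu> V x)))"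
      using conjunct2[OF conjunct2[OF assms(2)[unfolded kernel_family_def]]] .
    from this[rule_format, where x=x and E=UNIV, OF oV oW WV] show ?thesis by (simp add: \<nu>_def)
  qed
  have sn: "sets \<nu> = sets borel" using K1[OF oW] by (simp add: \<nu>_def finite_borel_measure_def)
  have spn: "space \<nu> = UNIV" using sets_eq_imp_space_eq[OF sn] by simp
  have nW: "emeasure \<nu> W = 0" using K1[OF oW] by (simp add: \<nu>_def)
  have n1: "emeasure \<nu> UNIV \<le> 1" using K1[OF oW] by (simp add: \<nu>_def)
  have Wsets: "W \<in> sets \<nu>" using oW sn by simp
  have Usets: "U \<in> sets \<nu>" using assms(3) sn by simp
  have AE: "AE y in completion \<nu>. y \<notin> W"
    apply (rule AE_completion)
    apply (rule AE_I[of _ _ W])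
    using nW Wsets spn by auto
  have pt: "emeasure (\<mu> V y) UNIV \<le> indicator U y + S" if "y \<notin> W" for y
  proof (cases "y \<in> U")
    case True
    then have "y \<in> A" using that by (auto simp: W_def)
    then have "y \<notin> V" by (simp add: V_def)
    then have "\<mu> V y = return borel y" using K1[OF oV] by blast
    then show ?thesis using True by simp
  next
    case False
    then have "emeasure (\<mu> V y) UNIV \<le> S"
      unfolding S_def sweep_def V_def by (intro SUP_upper) auto
    then show ?thesis by (simp add: add_increasing)
  qed
  have "emeasure (\<mu> V x) UNIV \<le> (\<integral>\<^sup>+ y. indicator U y + S \<partial>completion \<nu>)"
    unfolding K3 by (rule nn_integral_mono_AE) (use AE pt in auto)
  also have "\<dots> = (\<integral>\<^sup>+ y. indicator U y + S \<partial>\<nu>)" by (rule nn_integral_completion)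
  also have "\<dots> = (\<integral>\<^sup>+ y. indicator U y \<partial>\<nu>) + (\<integral>\<^sup>+ y. S \<partial>\<nu>)"
    by (rule nn_integral_add) (use Usets in auto)
  also have "\<dots> = emeasure \<nu> U + S * emeasure \<nu> UNIV"
    using Usets spn by simp
  also have "\<dots> \<le> emeasure \<nu> U + S"
    using n1 by (intro add_left_mono) (metis mult.comm_neutral mult_left_mono zero_le)
  finally have main: "emeasure (\<mu> V x) UNIV \<le> emeasure \<nu> U + S" .
  have fin: "emeasure (\<mu> V x) UNIV \<noteq> top"
    using K1[OF oV] by (metis ennreal_one_less_top linorder_not_le top.extremum_unique)
  show ?thesis
    unfolding ennreal_minus_le_iff
    using main fin by (simp add: sweep_def V_def \<nu>_def W_def S_def add.commute)
qed

end
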